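(* Fix any enumeration $(\mathtt C_n[-])_{n\in\mathbb N}$ of all contexts of the untyped $\lambda$-calculus, and define on the set $\Lambda$ of $\lambda$-terms $$p_{\mathrm{ctx}}(M,N)=\sum\Big\{\tfrac{1}{2^n}\ \Big|\ n\in\mathbb N,\ \mathtt C_n[M]\text{ is unsolvable or }\mathtt C_n[N]\text{ is unsolvable}\Big\}.$$ Then $p_{\mathrm{ctx}}$ is a sensible extensional $\lambda$-PPM.
   Context: A context $\mathtt C[-]$ is a $\lambda$-term with one hole; $\mathtt C[M]$ is the result of filling the hole with $M$. A $\lambda$-term is solvable if it has a head normal form (standard notion). A partial pseudo-metric (PPM) on a set $X$ is a map $p:X\times X\to[0,+\infty]$ satisfying, for all $x,y,z$: $p(x,x)\leq p(x,y)$; $p(x,y)=p(y,x)$; $p(x,y)\leq p(x,z)+p(z,y)-p(z,z)$. It induces the preorder $x\leq_p y$ iff $p(x,y)\leq p(x,x)$, and the equivalence $x\simeq_p y$ iff $x\leq_p y$ and $y\leq_p x$. Open balls are $B^p_\epsilon(x)=\{y\mid p(y,x)<p(x,x)+\epsilon\}$ ($\epsilon>0$), and the topology $\mathcal O_p(X)$ consists of all unions of open balls; a map $f:X\to X$ is $p$-continuous if it is continuous for $\mathcal O_p(X)$. A $\lambda$-theory is an equivalence relation $\simeq$ on $\Lambda$ such that $M\simeq N$ implies $MP\simeq NP$, $PM\simeq PN$ and $\lambda x.M\simeq\lambda x.N$, and $(\lambda x.M)N\simeq M[N/x]$ always holds; it is extensional if moreover $M\simeq\lambda x.Mx$ (for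 $x$ not free in $M$). A $\lambda$-PPM (resp. extensional $\lambda$-PPM) is a PPM $p$ on $\Lambda$ such that $\simeq_p$ is a $\lambda$-theory (resp. an extensional $\lambda$-theory) and, for every context $\mathtt C[-]$, the map $M\mapsto\mathtt C[M]$ is $p$-continuous. A $\lambda$-PPM $p$ is sensible if every unsolvable term $M$ is generic for $p$ (i.e. $M\leq_p N$ for all $N\in\Lambda$) while no solvable term is generic for $p$. *)

theory Defs
  imports Complex_Main "HOL-Library.Extended_Nonnegative_Real"
begin

section \<open>Untyped lambda-terms (de Bruijn indices, i.e. terms up to alpha-equivalence)\<close>

datatype lterm = Var nat | App lterm lterm | Abs lterm

primrec lift :: "lterm \<Rightarrow> nat \<Rightarrow> lterm" where
  "lift (Var i) k = (if i < k then Var i else Var (i + 1))"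
| "lift (App s t) k = App (lift s k) (lift t k)"
| "lift (Abs s) k = Abs (lift s (k + 1))"

primrec subst :: "lterm \<Rightarrow> lterm \<Rightarrow> nat \<Rightarrow> lterm" where
  "subst (Var i) t k = (if k < i then Var (i - 1) else if i = k then t else Var i)"
| "subst (App s u) t k = App (subst s t k) (subst u t k)"
| "subst (Abs s) t k = Abs (subst s (lift t 0) (k + 1))"

inductive beta :: "lterm \<Rightarrow> lterm \<Rightarrow> bool" where
  beta_rule: "beta (App (Abs s) t) (subst s t 0)"
| appL: "beta s t \<Longrightarrow> beta (App s u) (App t u)"
| appR: "beta s t \<Longrightarrow> beta (App u s) (App u t)"
| abs: "beta s t \<Longrightarrow> beta (Abs s) (Abs t)"

definition beta_conv :: "lterm \<Rightarrow> lterm \<Rightarrow> bool" where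
  "beta_conv = (sup beta beta\<inverse>\<inverse>)\<^sup>*\<^sup>*"

inductive head_var_app :: "lterm \<Rightarrow> bool" where
  "head_var_app (Var i)"
| "head_var_app M \<Longrightarrow> head_var_app (App M N)"

inductive hnf :: "lterm \<Rightarrow> bool" where
  "head_var_app M \<Longrightarrow> hnf M"
| "hnf M \<Longrightarrow> hnf (Abs M)"

definition solvable :: "lterm \<Rightarrow> bool" where
  "solvable M \<longleftrightarrow> (\<exists>N. beta_conv M N \<and> hnf N)"

datatype ctx = Hole | CAppL ctx lterm | CAppR lterm ctx | CAbs ctx

primrec plug :: "ctx \<Rightarrow> lterm \<Rightarrow> lterm" where
  "plug Hole M = M"
| "plug (CAppL C N) M = App (plug C M) N"
| "plug (CAppR N C) M = App N (plug C M)"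
| "plug (CAbs C) M = Abs (plug C M)"

definition ppm :: "('a \<Rightarrow> 'a \<Rightarrow> ennreal) \<Rightarrow> bool" where
  "ppm p \<longleftrightarrow>
     (\<forall>x y. p x x \<le> p x y) \<and>
     (\<forall>x y. p x y = p y x) \<and>
     (\<forall>x y z. p x y + p z z \<le> p x z + p z y)"

definition ppm_le :: "('a \<Rightarrow> 'a \<Rightarrow> ennreal) \<Rightarrow> 'a \<Rightarrow> 'a \<Rightarrow> bool" where
  "ppm_le p x y \<longleftrightarrow> p x y \<le> p x x"

definition ppm_eq :: "('a \<Rightarrow> 'a \<Rightarrow> ennreal) \<Rightarrow> 'a \<Rightarrow> 'a \<Rightarrow> bool" where
  "ppm_eq p x y \<longleftrightarrow> ppm_le p x y \<and> ppm_le p y x"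

definition ppm_ball :: "('a \<Rightarrow> 'a \<Rightarrow> ennreal) \<Rightarrow> real \<Rightarrow> 'a \<Rightarrow> 'a set" where
  "ppm_ball p \<epsilon> x = {y. p y x < p x x + ennreal \<epsilon>}"

definition ppm_open :: "('a \<Rightarrow> 'a \<Rightarrow> ennreal) \<Rightarrow> 'a set \<Rightarrow> bool" where
  "ppm_open p U \<longleftrightarrow>
     (\<exists>F. (\<forall>B\<in>F. \<exists>x \<epsilon>. \<epsilon> > 0 \<and> B = ppm_ball p \<epsilon> x) \<and> U = \<Union>F)"

definition ppm_continuous :: "('a \<Rightarrow> 'a \<Rightarrow> ennreal) \<Rightarrow> ('a \<Rightarrow> 'a) \<Rightarrow> bool" where
  "ppm_continuous p f \<longleftrightarrow> (\<forall>U. ppm_open p U \<longrightarrow> ppm_open p (f -` U))"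

definition lambda_theory :: "(lterm \<Rightarrow> lterm \<Rightarrow> bool) \<Rightarrow> bool" where
  "lambda_theory E \<longleftrightarrow>
     equivp E \<and>
     (\<forall>M N P. E M N \<longrightarrow> E (App M P) (App N P)) \<and>
     (\<forall>M N P. E M N \<longrightarrow> E (App P M) (App P N)) \<and>
     (\<forall>M N. E M N \<longrightarrow> E (Abs M) (Abs N)) \<and>
     (\<forall>M N. E (App (Abs M) N) (subst M N 0))"

text \<open>Eta: M \<simeq> \<lambda>x. M x with x not free in M (in de Bruijn: lift M 0).\<close>
definition ext_lambda_theory :: "(lterm \<Rightarrow> lterm \<Rightarrow> bool) \<Rightarrow> bool" where
  "ext_lambda_theory E \<longleftrightarrow>
     lambda_theory E \<and> (\<forall>M. E M (Abs (App (lift M 0) (Var 0))))"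

definition lambda_ppm :: "(lterm \<Rightarrow> lterm \<Rightarrow> ennreal) \<Rightarrow> bool" where
  "lambda_ppm p \<longleftrightarrow>
     ppm p \<and> lambda_theory (ppm_eq p) \<and> (\<forall>C. ppm_continuous p (plug C))"

definition ext_lambda_ppm :: "(lterm \<Rightarrow> lterm \<Rightarrow> ennreal) \<Rightarrow> bool" where
  "ext_lambda_ppm p \<longleftrightarrow>
     ppm p \<and> ext_lambda_theory (ppm_eq p) \<and> (\<forall>C. ppm_continuous p (plug C))"

definition generic :: "(lterm \<Rightarrow> lterm \<Rightarrow> ennreal) \<Rightarrow> lterm \<Rightarrow> bool" where
  "generic p M \<longleftrightarrow> (\<forall>N. ppm_le p M N)"

definition sensible :: "(lterm \<Rightarrow> lterm \<Rightarrow> ennreal) \<Rightarrow> bool" where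
  "sensible p \<longleftrightarrow>
     lambda_ppm p \<and>
     (\<forall>M. \<not> solvable M \<longrightarrow> generic p M) \<and>
     (\<forall>M. solvable M \<longrightarrow> \<not> generic p M)"

definition p_ctx :: "(nat \<Rightarrow> ctx) \<Rightarrow> lterm \<Rightarrow> lterm \<Rightarrow> ennreal" where
  "p_ctx C M N =
     (\<Sum>n. if \<not> solvable (plug (C n) M) \<or> \<not> solvable (plug (C n) N)
          then ennreal (1 / 2 ^ n) else 0)"

end

theory Submission
  imports Defs
begin


lemma lift_lift:
  "i < k + 1 \<Longrightarrow> lift (lift t i) (Suc k) = lift (lift t k) i"
  by (induct t arbitrary: i k) auto

lemma lift_subst [simp]:
  "j < i + 1 \<Longrightarrow> lift (subst t s j) i = subst (lift t (i + 1)) (lift s i) j"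
  by (induct t arbitrary: i j s) (simp_all add: diff_Suc lift_lift split: nat.split)

lemma lift_subst_lt:
  "i < j + 1 \<Longrightarrow> lift (subst t s j) i = subst (lift t i) (lift s i) (j + 1)"
  by (induct t arbitrary: i j s) (auto simp: lift_lift)

lemma subst_lift [simp]: "subst (lift t k) s k = t"
  by (induct t arbitrary: k s) simp_all

lemma subst_subst:
  "i < j + 1 \<Longrightarrow> subst (subst t (lift v i) (Suc j)) (subst u v j) i = subst (subst t u i) v j"
  by (induct t arbitrary: i j u v)
    (simp_all add: diff_Suc lift_lift [symmetric] lift_subst_lt split: nat.split)

lemma subst_lift_Var [simp]: "subst (lift t (Suc k)) (Var k) k = t"
  by (induct t arbitrary: k) auto

lemma beta_lift: "beta s t \<Longrightarrow> beta (lift s k) (lift t k)"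
proof (induct arbitrary: k rule: beta.induct)
  case (beta_rule s t)
  have "beta (App (Abs (lift s (Suc k))) (lift t k)) (subst (lift s (Suc k)) (lift t k) 0)"
    by (rule beta.beta_rule)
  then show ?case by simp
qed (auto intro: beta.intros)

lemma betas_appL: "beta\<^sup>*\<^sup>* s t \<Longrightarrow> beta\<^sup>*\<^sup>* (App s u) (App t u)"
  by (induct rule: rtranclp_induct) (auto intro: rtranclp.rtrancl_into_rtrancl beta.appL)
lemma betas_appR: "beta\<^sup>*\<^sup>* s t \<Longrightarrow> beta\<^sup>*\<^sup>* (App u s) (App u t)"
  by (induct rule: rtranclp_induct) (auto intro: rtranclp.rtrancl_into_rtrancl beta.appR)
lemma betas_abs: "beta\<^sup>*\<^sup>* s t \<Longrightarrow> beta\<^sup>*\<^sup>* (Abs s) (Abs t)"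
  by (induct rule: rtranclp_induct) (auto intro: rtranclp.rtrancl_into_rtrancl beta.abs)
lemma betas_lift: "beta\<^sup>*\<^sup>* s t \<Longrightarrow> beta\<^sup>*\<^sup>* (lift s k) (lift t k)"
  by (induct rule: rtranclp_induct) (auto intro: rtranclp.rtrancl_into_rtrancl beta_lift)

lemma beta_plug: "beta M N \<Longrightarrow> beta (plug D M) (plug D N)"
  by (induct D) (auto intro: beta.intros)

lemma equivp_beta_conv: "equivp beta_conv"
proof (rule equivpI)
  show "reflp beta_conv" unfolding beta_conv_def by (simp add: reflpI)
  show "symp beta_conv" unfolding beta_conv_def
    by (rule sympI, erule rtranclp_induct) (auto intro: converse_rtranclp_into_rtranclp)
  show "transp beta_conv" unfolding beta_conv_def by (rule transpI) auto
qed

lemma betas_conv: "beta\<^sup>*\<^sup>* M N \<Longrightarrow> beta_conv M N"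
  unfolding beta_conv_def by (induct rule: rtranclp_induct) (auto intro: rtranclp.rtrancl_into_rtrancl)

lemma conv_solvable: "beta_conv M N \<Longrightarrow> solvable N \<Longrightarrow> solvable M"
  unfolding solvable_def using equivp_beta_conv
  by (meson equivp_transp)

lemma betas_solvable: "beta\<^sup>*\<^sup>* M N \<Longrightarrow> solvable N \<Longrightarrow> solvable M"
  using conv_solvable betas_conv by blast

section \<open>parallel reduction\<close>

inductive par :: "lterm \<Rightarrow> lterm \<Rightarrow> bool" where
  par_var: "par (Var i) (Var i)"
| par_app: "par s s' \<Longrightarrow> par t t' \<Longrightarrow> par (App s t) (App s' t')"
| par_abs: "par s s' \<Longrightarrow> par (Abs s) (Abs s')"
| par_beta: "par s s' \<Longrightarrow> par t t' \<Longrightarrow> par (App (Abs s) t) (subst s' t' 0)"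

lemma par_refl[simp, intro]: "par t t"
  by (induct t) (auto intro: par.intros)

lemma par_lift: "par s t \<Longrightarrow> par (lift s k) (lift t k)"
proof (induct arbitrary: k rule: par.induct)
  case (par_beta s s' t t')
  then have "par (App (Abs (lift s (Suc k))) (lift t k)) (subst (lift s' (Suc k)) (lift t' k) 0)"
    by (auto intro: par.par_beta)
  then show ?case by simp
qed (auto intro: par.intros)

lemma par_subst: "par s s' \<Longrightarrow> par t t' \<Longrightarrow> par (subst s t k) (subst s' t' k)"
proof (induct arbitrary: t t' k rule: par.induct)
  case (par_var i)
  then show ?case by auto
next
  case (par_abs s s')
  then show ?case by (simp add: par.par_abs par_lift)
next
  case (par_app s s' u u')
  then show ?case by (auto intro: par.intros)
next
  case (par_beta s s' u u')
  have "par (App (Abs (subst s (lift t 0) (Suc k))) (subst u t k))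
     (subst (subst s' (lift t' 0) (Suc k)) (subst u' t' k) 0)"
    using par_beta by (intro par.par_beta) (auto intro: par_lift)
  then show ?case using subst_subst[of 0 k s' t' u'] by simp
qed

lemma beta_par: "beta s t \<Longrightarrow> par s t"
  by (induct rule: beta.induct) (auto intro: par.intros)

inductive wh :: "lterm \<Rightarrow> lterm \<Rightarrow> bool" where
  wh_beta: "wh (App (Abs s) t) (subst s t 0)"
| wh_app: "wh s s' \<Longrightarrow> wh (App s t) (App s' t)"

inductive wi :: "lterm \<Rightarrow> lterm \<Rightarrow> bool" where
  wi_var: "wi (Var i) (Var i)"
| wi_abs: "par s s' \<Longrightarrow> wi (Abs s) (Abs s')"
| wi_app: "wi s s' \<Longrightarrow> par t t' \<Longrightarrow> wi (App s t) (App s' t')"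

lemma wh_beta: "wh s t \<Longrightarrow> beta s t"
  by (induct rule: wh.induct) (auto intro: beta.intros)

lemma whs_betas: "wh\<^sup>*\<^sup>* s t \<Longrightarrow> beta\<^sup>*\<^sup>* s t"
  by (induct rule: rtranclp_induct) (auto intro: rtranclp.rtrancl_into_rtrancl wh_beta)

lemma wh_subst: "wh s s' \<Longrightarrow> wh (subst s t k) (subst s' t k)"
proof (induct arbitrary: k rule: wh.induct)
  case (wh_beta s u)
  have "wh (App (Abs (subst s (lift t 0) (Suc k))) (subst u t k))
     (subst (subst s (lift t 0) (Suc k)) (subst u t k) 0)" by (rule wh.wh_beta)
  then show ?case using subst_subst[of 0 k s t u] by simp
qed (auto intro: wh.intros)

lemma wh_lift: "wh s s' \<Longrightarrow> wh (lift s k) (lift s' k)"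
proof (induct arbitrary: k rule: wh.induct)
  case (wh_beta s u)
  have "wh (App (Abs (lift s (Suc k))) (lift u k)) (subst (lift s (Suc k)) (lift u k) 0)"
    by (rule wh.wh_beta)
  then show ?case by simp
qed (auto intro: wh.intros)

lemma whs_subst: "wh\<^sup>*\<^sup>* s s' \<Longrightarrow> wh\<^sup>*\<^sup>* (subst s t k) (subst s' t k)"
  by (induct rule: rtranclp_induct) (auto intro: rtranclp.rtrancl_into_rtrancl wh_subst)

lemma whs_app: "wh\<^sup>*\<^sup>* s s' \<Longrightarrow> wh\<^sup>*\<^sup>* (App s t) (App s' t)"
  by (induct rule: rtranclp_induct) (auto intro: rtranclp.rtrancl_into_rtrancl wh_app)

lemma wi_par: "wi s t \<Longrightarrow> par s t"
  by (induct rule: wi.induct) (auto intro: par.intros)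

lemma lemS:
  assumes "wi a a'" and "par b b'" and "\<exists>L. wh\<^sup>*\<^sup>* b L \<and> wi L b'"
  shows "\<exists>L. wh\<^sup>*\<^sup>* (subst a b k) L \<and> wi L (subst a' b' k)"
  using assms(1)
proof (induct rule: wi.induct)
  case (wi_var i)
  then show ?case using assms(3) by (auto intro: wi.intros)
next
  case (wi_abs s s')
  have "wi (subst (Abs s) b k) (subst (Abs s') b' k)"
    using wi_abs assms(2) by (auto intro!: wi.intros par_subst par_lift)
  then show ?case by blast
next
  case (wi_app s s' t t')
  then obtain L where L: "wh\<^sup>*\<^sup>* (subst s b k) L" "wi L (subst s' b' k)" by blast
  have "wh\<^sup>*\<^sup>* (subst (App s t) b k) (App L (subst t b k))"
    using L(1) by (simp add: whs_app)
  moreover have "wi (App L (subst t b k)) (subst (App s' t') b' k)"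
    using L(2) wi_app assms(2) by (auto intro: wi.intros par_subst)
  ultimately show ?case by blast
qed

lemma lemW: "par m n \<Longrightarrow> \<exists>L. wh\<^sup>*\<^sup>* m L \<and> wi L n"
proof (induct rule: par.induct)
  case (par_var i)
  then show ?case by (auto intro: wi.intros)
next
  case (par_app s s' t t')
  then obtain L where "wh\<^sup>*\<^sup>* s L" "wi L s'" by blast
  then show ?case using par_app by (auto intro!: exI[of _ "App L t"] whs_app wi.intros)
next
  case (par_abs s s')
  then show ?case by (auto intro: wi.intros)
next
  case (par_beta s s' t t')
  then obtain L1 where L1: "wh\<^sup>*\<^sup>* s L1" "wi L1 s'" by blast
  have "\<exists>L. wh\<^sup>*\<^sup>* (subst L1 t 0) L \<and> wi L (subst s' t' 0)"
    using lemS[OF L1(2) par_beta(3) par_beta(4)] .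
  then obtain L where L: "wh\<^sup>*\<^sup>* (subst L1 t 0) L" "wi L (subst s' t' 0)" by blast
  have "wh\<^sup>*\<^sup>* (App (Abs s) t) (subst s t 0)" by (auto intro: wh.intros)
  also have "wh\<^sup>*\<^sup>* (subst s t 0) (subst L1 t 0)" using L1(1) by (rule whs_subst)
  also have "wh\<^sup>*\<^sup>* (subst L1 t 0) L" by (rule L(1))
  finally show ?case using L(2) by blast
qed

lemma wi_wh: "wh a' b' \<Longrightarrow> wi a a' \<Longrightarrow> \<exists>b. wh a b \<and> par b b'"
proof (induct arbitrary: a rule: wh.induct)
  case (wh_beta s' t')
  from wh_beta obtain a1 t where a: "a = App a1 t" "wi a1 (Abs s')" "par t t'"
    by (auto elim: wi.cases)
  from a(2) obtain s where "a1 = Abs s" "par s s'" by (auto elim: wi.cases)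
  then show ?case using a by (auto intro: wh.intros par_subst)
next
  case (wh_app s' s'' t')
  from wh_app(3) obtain s0 t0 where a: "a = App s0 t0" "wi s0 s'" "par t0 t'"
    by (auto elim: wi.cases)
  from wh_app(2)[OF a(2)] obtain b0 where "wh s0 b0" "par b0 s''" by blast
  then show ?case using a by (auto intro: wh.intros par.intros)
qed

lemma wh_par: "wh a b \<Longrightarrow> par a a' \<Longrightarrow> par b a' \<or> (\<exists>b'. wh a' b' \<and> par b b')"
proof (induct arbitrary: a' rule: wh.induct)
  case (wh_beta s t)
  from wh_beta show ?case
  proof (cases rule: par.cases)
    case (par_app s1 t1)
    from par_app(2) obtain s2 where "s1 = Abs s2" "par s s2" by (auto elim: par.cases)
    then show ?thesis using par_app by (auto intro: wh.intros par_subst)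
  next
    case (par_beta s1 t1)
    then show ?thesis by (auto intro: par_subst)
  qed
next
  case (wh_app s s'' t)
  from wh_app(3) show ?case
  proof (cases rule: par.cases)
    case (par_app s1 t1)
    from wh_app(2)[OF par_app(2)] show ?thesis
    proof
      assume "par s'' s1" then show ?thesis using par_app by (auto intro: par.intros)
    next
      assume "\<exists>b'. wh s1 b' \<and> par s'' b'"
      then show ?thesis using par_app by (auto intro: par.intros wh.intros)
    qed
  next
    case par_beta
    then show ?thesis using wh_app(1) by (auto elim: wh.cases)
  qed
qed

section \<open>head normalisation\<close>

inductive hn :: "lterm \<Rightarrow> bool" where
  hn_hva: "head_var_app M \<Longrightarrow> hn M"
| hn_abs: "hn M \<Longrightarrow> hn (Abs M)"
| hn_wh: "wh M M' \<Longrightarrow> hn M' \<Longrightarrow> hn M"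

lemma hn_whs: "wh\<^sup>*\<^sup>* M M' \<Longrightarrow> hn M' \<Longrightarrow> hn M"
  by (induct rule: converse_rtranclp_induct) (auto intro: hn_wh)

lemma hva_par: "head_var_app M \<Longrightarrow> par M M' \<Longrightarrow> head_var_app M'"
proof (induct arbitrary: M' rule: head_var_app.induct)
  case (1 i) then show ?case by (auto elim: par.cases intro: head_var_app.intros)
next
  case (2 M N)
  from 2(3) show ?case
  proof (cases rule: par.cases)
    case (par_app s' t') then show ?thesis using 2 by (auto intro: head_var_app.intros)
  next
    case par_beta then show ?thesis using 2(1) by (auto elim: head_var_app.cases)
  qed
qed

lemma hva_wi: "head_var_app M' \<Longrightarrow> wi M M' \<Longrightarrow> head_var_app M"
proof (induct arbitrary: M rule: head_var_app.induct)
  case (1 i) then show ?case by (auto elim: wi.cases intro: head_var_app.intros)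
next
  case (2 M' N')
  from 2(3) show ?case by (cases rule: wi.cases) (use 2 in \<open>auto intro: head_var_app.intros\<close>)
qed

lemma hn_par: "hn M \<Longrightarrow> par M M' \<Longrightarrow> hn M'"
proof (induct arbitrary: M' rule: hn.induct)
  case (hn_hva M) then show ?case by (auto intro: hn.hn_hva hva_par)
next
  case (hn_abs M) then show ?case by (auto elim: par.cases intro: hn.hn_abs)
next
  case (hn_wh M M1)
  from wh_par[OF hn_wh(1) hn_wh(4)] show ?case
  proof
    assume "par M1 M'" then show ?thesis using hn_wh by blast
  next
    assume "\<exists>b'. wh M' b' \<and> par M1 b'"
    then show ?thesis using hn_wh by (blast intro: hn.hn_wh)
  qed
qed

lemma par_hn: "hn M' \<Longrightarrow> par M M' \<Longrightarrow> hn M"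
proof (induct arbitrary: M rule: hn.induct)
  case (hn_hva M')
  from lemW[OF hn_hva(2)] obtain L where L: "wh\<^sup>*\<^sup>* M L" "wi L M'" by blast
  then show ?case using hn_hva(1) by (auto intro: hn_whs hn.hn_hva hva_wi)
next
  case (hn_abs A')
  from lemW[OF hn_abs(3)] obtain L where L: "wh\<^sup>*\<^sup>* M L" "wi L (Abs A')" by blast
  from L(2) obtain A where "L = Abs A" "par A A'" by (auto elim: wi.cases)
  then show ?case using hn_abs L(1) by (auto intro: hn_whs hn.hn_abs)
next
  case (hn_wh M' M1)
  from lemW[OF hn_wh(4)] obtain L where L: "wh\<^sup>*\<^sup>* M L" "wi L M'" by blast
  from wi_wh[OF hn_wh(1) L(2)] obtain L1 where "wh L L1" "par L1 M1" by blast
  then show ?case using hn_wh L(1) by (auto intro: hn_whs hn.hn_wh)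
qed

lemma hnf_hn: "hnf M \<Longrightarrow> hn M"
  by (induct rule: hnf.induct) (auto intro: hn.intros)

lemma hn_hnf: "hn M \<Longrightarrow> \<exists>N. beta\<^sup>*\<^sup>* M N \<and> hnf N"
proof (induct rule: hn.induct)
  case (hn_hva M) then show ?case by (auto intro: hnf.intros)
next
  case (hn_abs M) then show ?case by (auto intro: hnf.intros betas_abs)
next
  case (hn_wh M M') then show ?case
    by (meson converse_rtranclp_into_rtranclp wh_beta)
qed

lemma conv_hn: "beta_conv M N \<Longrightarrow> hn M = hn N"
  unfolding beta_conv_def
proof (induct rule: rtranclp_induct)
  case (step y z)
  then show ?case by (auto dest: beta_par intro: hn_par par_hn)
qed simp

lemma solvable_hn: "solvable M \<longleftrightarrow> hn M"
proof
  assume "solvable M"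
  then obtain N where "beta_conv M N" "hnf N" unfolding solvable_def by blast
  then show "hn M" using conv_hn hnf_hn by blast
next
  assume "hn M"
  then show "solvable M" using hn_hnf betas_conv unfolding solvable_def by blast
qed



lemma hva_simps[simp]: "\<not> head_var_app (Abs s)" "head_var_app (Var i)"
  "head_var_app (App s t) \<longleftrightarrow> head_var_app s"
    apply (rule notI, erule head_var_app.cases, simp, simp)
   apply (rule head_var_app.intros)
  apply (rule iffI)
   apply (erule head_var_app.cases, simp, simp)
  apply (erule head_var_app.intros)
  done

lemma wh_simps[simp]: "\<not> wh (Abs s) N" "\<not> wh (Var i) N"
  by (rule notI, erule wh.cases, simp, simp)+

lemma wh_App: "wh (App s t) N \<longleftrightarrow> (\<exists>A. s = Abs A \<and> N = subst A t 0) \<or> (\<exists>s'. wh s s' \<and> N = App s' t)"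
proof
  assume "wh (App s t) N" then show "(\<exists>A. s = Abs A \<and> N = subst A t 0) \<or> (\<exists>s'. wh s s' \<and> N = App s' t)"
    by (cases rule: wh.cases) auto
next
  assume "(\<exists>A. s = Abs A \<and> N = subst A t 0) \<or> (\<exists>s'. wh s s' \<and> N = App s' t)"
  then show "wh (App s t) N"
  proof (elim disjE exE conjE)
    fix A assume "s = Abs A" "N = subst A t 0" then show ?thesis by (simp add: wh.wh_beta)
  next
    fix s' assume "wh s s'" "N = App s' t" then show ?thesis by (simp add: wh.wh_app)
  qed
qed

lemma hva_no_wh: "head_var_app M \<Longrightarrow> \<not> wh M N"
proof (induct M arbitrary: N)
  case (App M1 M2)
  show ?case
  proof
    assume "wh (App M1 M2) N"
    then show False unfolding wh_App using App by auto
  qed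
qed auto

lemma wh_det: "wh M N1 \<Longrightarrow> wh M N2 \<Longrightarrow> N1 = N2"
proof (induct M arbitrary: N1 N2)
  case (App M1 M2)
  from App(3,4) show ?case unfolding wh_App using App(1) by auto
qed auto

lemma trich: "head_var_app M \<or> (\<exists>A. M = Abs A) \<or> (\<exists>M'. wh M M')"
proof (induct M)
  case (Var x) then show ?case by (auto intro: head_var_app.intros)
next
  case (App M1 M2)
  from App(1) show ?case
  proof (elim disjE exE)
    assume "head_var_app M1" then show ?thesis by simp
  next
    fix A assume "M1 = Abs A" then have "wh (App M1 M2) (subst A M2 0)" by (simp add: wh.wh_beta)
    then show ?thesis by blast
  next
    fix M' assume "wh M1 M'" then have "wh (App M1 M2) (App M' M2)" by (rule wh.wh_app)
    then show ?thesis by blast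
  qed
qed auto

lemma hva_lift: "head_var_app (lift M k) \<Longrightarrow> head_var_app M"
proof (induct M arbitrary: k)
  case (Var x) then show ?case by (auto intro: head_var_app.intros)
next
  case (App M1 M2) then show ?case by auto
next
  case (Abs M) then show ?case by simp
qed

lemma hva_lift2: "head_var_app M \<Longrightarrow> head_var_app (lift M k)"
  by (induct rule: head_var_app.induct) (auto intro: head_var_app.intros)

lemma hn_abs_inv: "hn (Abs M) \<Longrightarrow> hn M"
  by (erule hn.cases) auto

lemma hn_lift_inv: "hn X \<Longrightarrow> X = lift M k \<Longrightarrow> hn M"
proof (induct arbitrary: M k rule: hn.induct)
  case (hn_hva X) then show ?case using hva_lift by (blast intro: hn.hn_hva)
next
  case (hn_abs A)
  then obtain M0 where "M = Abs M0" "A = lift M0 (Suc k)" by (cases M) (auto split: if_splits)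
  then show ?case using hn_abs by (auto intro: hn.hn_abs)
next
  case (hn_wh X X')
  from trich[of M] show ?case
  proof (elim disjE exE)
    assume "head_var_app M" then show ?thesis by (rule hn.hn_hva)
  next
    fix A assume "M = Abs A" then show ?thesis using hn_wh by auto
  next
    fix M' assume "wh M M'"
    then have "wh X (lift M' k)" using hn_wh wh_lift by simp
    then have "X' = lift M' k" using wh_det hn_wh(1) by blast
    then show ?thesis using hn_wh \<open>wh M M'\<close> by (auto intro: hn.hn_wh)
  qed
qed

lemma hn_subst_inv: "hn X \<Longrightarrow> X = subst M N k \<Longrightarrow> hn M"
proof (induct arbitrary: M N k rule: hn.induct)
  case (hn_hva X)
  from trich[of M] show ?case
  proof (elim disjE exE)
    assume "head_var_app M" then show ?thesis by (rule hn.hn_hva)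
  next
    fix A assume "M = Abs A" then show ?thesis using hn_hva by auto
  next
    fix M' assume "wh M M'"
    then have "wh X (subst M' N k)" using hn_hva wh_subst by simp
    then show ?thesis using hva_no_wh hn_hva by blast
  qed
next
  case (hn_abs A)
  from trich[of M] show ?case
  proof (elim disjE exE)
    assume "head_var_app M" then show ?thesis by (rule hn.hn_hva)
  next
    fix A0 assume "M = Abs A0" then show ?thesis using hn_abs by (auto intro: hn.hn_abs)
  next
    fix M' assume "wh M M'"
    then have "wh (Abs A) (subst M' N k)" using hn_abs wh_subst by simp
    then show ?thesis by auto
  qed
next
  case (hn_wh X X')
  from trich[of M] show ?case
  proof (elim disjE exE)
    assume "head_var_app M" then show ?thesis by (rule hn.hn_hva)
  next
    fix A assume "M = Abs A" then show ?thesis using hn_wh by auto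
  next
    fix M' assume "wh M M'"
    then have "wh X (subst M' N k)" using hn_wh wh_subst by simp
    then have "X' = subst M' N k" using wh_det hn_wh(1) by blast
    then show ?thesis using hn_wh \<open>wh M M'\<close> by (auto intro: hn.hn_wh)
  qed
qed

lemma hn_app_inv: "hn X \<Longrightarrow> X = App M P \<Longrightarrow> hn M"
proof (induct arbitrary: M P rule: hn.induct)
  case (hn_hva X) then show ?case by (auto intro: hn.hn_hva)
next
  case (hn_abs A) then show ?case by auto
next
  case (hn_wh X X')
  from hn_wh(1) show ?case unfolding hn_wh(4)
  proof (cases rule: wh.cases)
    case (wh_beta s)
    then show ?thesis using hn_wh hn_subst_inv by (auto intro: hn.hn_abs)
  next
    case (wh_app s')
    then show ?thesis using hn_wh by (auto intro: hn.hn_wh)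
  qed
qed



section \<open>Genericity\<close>

inductive G :: "lterm \<Rightarrow> lterm \<Rightarrow> bool" where
  G_uns: "\<not> hn M \<Longrightarrow> G M N"
| G_var: "G (Var i) (Var i)"
| G_app: "G s s' \<Longrightarrow> G t t' \<Longrightarrow> G (App s t) (App s' t')"
| G_abs: "G s s' \<Longrightarrow> G (Abs s) (Abs s')"

lemma hn_lift_inv': "hn (lift M k) \<Longrightarrow> hn M" using hn_lift_inv by blast
lemma hn_subst_inv': "hn (subst M N k) \<Longrightarrow> hn M" using hn_subst_inv by blast
lemma hn_app_inv': "hn (App M N) \<Longrightarrow> hn M" using hn_app_inv by blast

lemma G_refl: "G t t"
  by (induct t) (auto intro: G.intros)

lemma G_lift: "G s s' \<Longrightarrow> G (lift s k) (lift s' k)"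
  by (induct arbitrary: k rule: G.induct) (auto intro: G.intros dest: hn_lift_inv')

lemma G_subst: "G s s' \<Longrightarrow> G t t' \<Longrightarrow> G (subst s t k) (subst s' t' k)"
proof (induct arbitrary: t t' k rule: G.induct)
  case (G_uns M N) then show ?case by (auto intro: G.G_uns dest: hn_subst_inv')
next
  case (G_abs s s') then show ?case by (simp add: G.G_abs G_lift)
qed (auto intro: G.intros)

lemma hva_G: "G X Y \<Longrightarrow> head_var_app X \<Longrightarrow> head_var_app Y"
proof (induct rule: G.induct)
  case (G_uns M N) then show ?case by (auto intro: hn.hn_hva)
next
  case (G_app s s' t t') then show ?case by auto
qed auto

lemma G_abs_inv: "G (Abs A) Y \<Longrightarrow> hn (Abs A) \<Longrightarrow> \<exists>A'. Y = Abs A' \<and> G A A'"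
  by (erule G.cases) auto

lemma G_wh: "wh X X1 \<Longrightarrow> hn X \<Longrightarrow> G X Y \<Longrightarrow> \<exists>Y1. wh Y Y1 \<and> G X1 Y1"
proof (induct arbitrary: Y rule: wh.induct)
  case (wh_beta s t)
  from wh_beta(2) have "\<exists>Y0 B'. Y = App Y0 B' \<and> G (Abs s) Y0 \<and> G t B'"
    by (cases rule: G.cases) (use wh_beta(1) in auto)
  then obtain Y0 B' where Y: "Y = App Y0 B'" "G (Abs s) Y0" "G t B'" by blast
  have "hn (Abs s)" using hn_app_inv' wh_beta(1) by blast
  then obtain A' where "Y0 = Abs A'" "G s A'" using G_abs_inv Y(2) by blast
  then show ?case using Y wh_beta by (auto intro: wh.wh_beta G_subst)
next
  case (wh_app s s' t)
  from wh_app(4) have "\<exists>N Q. Y = App N Q \<and> G s N \<and> G t Q"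
    by (cases rule: G.cases) (use wh_app(3) in auto)
  then obtain N Q where Y: "Y = App N Q" "G s N" "G t Q" by blast
  have "hn s" using hn_app_inv' wh_app(3) by blast
  then obtain N1 where "wh N N1" "G s' N1" using wh_app(2) Y(2) by blast
  then show ?case using Y by (auto intro: wh.wh_app G.G_app)
qed

lemma G_hn: "hn X \<Longrightarrow> G X Y \<Longrightarrow> hn Y"
proof (induct arbitrary: Y rule: hn.induct)
  case (hn_hva M) then show ?case using hva_G by (blast intro: hn.hn_hva)
next
  case (hn_abs M)
  then obtain A' where "Y = Abs A'" "G M A'" using G_abs_inv hn.hn_abs by blast
  then show ?case using hn_abs by (auto intro: hn.hn_abs)
next
  case (hn_wh M M')
  then obtain Y1 where "wh Y Y1" "G M' Y1" using G_wh hn.hn_wh by blast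
  then show ?case using hn_wh by (auto intro: hn.hn_wh)
qed

lemma G_plug: "G M N \<Longrightarrow> G (plug D M) (plug D N)"
  by (induct D) (auto intro: G.intros G_refl)

lemma genericity: "\<not> solvable M \<Longrightarrow> solvable (plug D M) \<Longrightarrow> solvable (plug D N)"
  unfolding solvable_hn using G_hn G_plug G.G_uns by blast



section \<open>Eta\<close>

definition eta :: "lterm \<Rightarrow> lterm" where
  "eta Y = Abs (App (lift Y 0) (Var 0))"

inductive E :: "lterm \<Rightarrow> lterm \<Rightarrow> bool" where
  E_var: "E (Var i) (Var i)"
| E_app: "E s s' \<Longrightarrow> E t t' \<Longrightarrow> E (App s t) (App s' t')"
| E_abs: "E s s' \<Longrightarrow> E (Abs s) (Abs s')"
| E_eta: "E s s' \<Longrightarrow> E s (eta s')"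

lemma E_refl: "E t t"
  by (induct t) (auto intro: E.intros)

lemma lift_eta: "lift (eta s) k = eta (lift s k)"
  by (simp add: eta_def lift_lift)

lemma subst_eta: "subst (eta s) t k = eta (subst s t k)"
  by (simp add: eta_def lift_subst_lt)

lemma E_lift: "E s s' \<Longrightarrow> E (lift s k) (lift s' k)"
  by (induct arbitrary: k rule: E.induct) (auto intro: E.intros simp: lift_eta)

lemma E_subst: "E s s' \<Longrightarrow> E t t' \<Longrightarrow> E (subst s t k) (subst s' t' k)"
proof (induct arbitrary: t t' k rule: E.induct)
  case (E_abs s s') then show ?case by (simp add: E.E_abs E_lift)
next
  case (E_eta s s') then show ?case by (auto intro: E.intros simp: subst_eta)
qed (auto intro: E.intros)

lemma betas_eta: "beta\<^sup>*\<^sup>* s t \<Longrightarrow> beta\<^sup>*\<^sup>* (eta s) (eta t)"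
  unfolding eta_def by (intro betas_abs betas_appL betas_lift)

lemma eta_abs_beta: "beta (eta (Abs A)) (Abs A)"
proof -
  have "beta (App (Abs (lift A (Suc 0))) (Var 0)) (subst (lift A (Suc 0)) (Var 0) 0)"
    by (rule beta.beta_rule)
  then have "beta (App (Abs (lift A (Suc 0))) (Var 0)) A" by simp
  then show ?thesis unfolding eta_def by (simp add: beta.abs)
qed

lemma eta_app_beta: "beta (App (eta W) Q) (App W Q)"
proof -
  have "beta (App (eta W) Q) (subst (App (lift W 0) (Var 0)) Q 0)"
    unfolding eta_def by (rule beta.beta_rule)
  then show ?thesis by simp
qed

lemma E_abs_inv: "E X Y \<Longrightarrow> X = Abs A \<Longrightarrow> \<exists>A'. beta\<^sup>*\<^sup>* Y (Abs A') \<and> E A A'"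
proof (induct arbitrary: A rule: E.induct)
  case (E_abs s s') then show ?case by auto
next
  case (E_eta s s')
  then obtain A' where "beta\<^sup>*\<^sup>* s' (Abs A')" "E A A'" by blast
  then have "beta\<^sup>*\<^sup>* (eta s') (Abs A')"
    using betas_eta eta_abs_beta by (meson rtranclp.rtrancl_into_rtrancl)
  then show ?case using \<open>E A A'\<close> by blast
qed auto

lemma hnf_eta: "head_var_app W \<Longrightarrow> hnf (eta W)"
  unfolding eta_def by (auto intro!: hnf.intros head_var_app.intros hva_lift2)

lemma eta_eta_beta: "beta (eta (eta W)) (eta W)"
proof -
  have "eta (eta W) = Abs (App (Abs (App (lift (lift W 0) (Suc 0)) (Var 0))) (Var 0))"
    by (simp add: eta_def)
  moreover have "beta (App (Abs (App (lift (lift W 0) (Suc 0)) (Var 0))) (Var 0))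
      (subst (App (lift (lift W 0) (Suc 0)) (Var 0)) (Var 0) 0)"
    by (rule beta.beta_rule)
  ultimately show ?thesis by (simp add: eta_def beta.abs)
qed

lemma E_hva: "E X Y \<Longrightarrow> head_var_app X \<Longrightarrow>
   \<exists>W. head_var_app W \<and> (beta\<^sup>*\<^sup>* Y W \<or> beta\<^sup>*\<^sup>* Y (eta W))"
proof (induct rule: E.induct)
  case (E_var i) then show ?case by (auto intro: head_var_app.intros)
next
  case (E_app s s' t t')
  then have "head_var_app s" by simp
  then obtain W where W: "head_var_app W" "beta\<^sup>*\<^sup>* s' W \<or> beta\<^sup>*\<^sup>* s' (eta W)"
    using E_app by blast
  from W(2) have "beta\<^sup>*\<^sup>* (App s' t') (App W t')"
  proof
    assume "beta\<^sup>*\<^sup>* s' W" then show ?thesis by (rule betas_appL)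
  next
    assume "beta\<^sup>*\<^sup>* s' (eta W)"
    then have "beta\<^sup>*\<^sup>* (App s' t') (App (eta W) t')" by (rule betas_appL)
    then show ?thesis using eta_app_beta by (meson rtranclp.rtrancl_into_rtrancl)
  qed
  then show ?case using W(1) by (auto intro: head_var_app.intros)
next
  case (E_abs s s') then show ?case by simp
next
  case (E_eta s s')
  then obtain W where W: "head_var_app W" "beta\<^sup>*\<^sup>* s' W \<or> beta\<^sup>*\<^sup>* s' (eta W)" by blast
  from W(2) have "beta\<^sup>*\<^sup>* (eta s') (eta W)"
  proof
    assume "beta\<^sup>*\<^sup>* s' W" then show ?thesis by (rule betas_eta)
  next
    assume "beta\<^sup>*\<^sup>* s' (eta W)"
    then have "beta\<^sup>*\<^sup>* (eta s') (eta (eta W))" by (rule betas_eta)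
    then show ?thesis using eta_eta_beta by (meson rtranclp.rtrancl_into_rtrancl)
  qed
  then show ?case using W(1) by blast
qed

lemma E_wh1: "E X Y \<Longrightarrow> wh X X1 \<Longrightarrow> \<exists>Y1. beta\<^sup>*\<^sup>* Y Y1 \<and> E X1 Y1"
proof (induct arbitrary: X1 rule: E.induct)
  case (E_var i) then show ?case by simp
next
  case (E_abs s s') then show ?case by simp
next
  case (E_eta s s')
  then obtain Y1 where "beta\<^sup>*\<^sup>* s' Y1" "E X1 Y1" by blast
  then show ?case by (auto intro: E.E_eta betas_eta)
next
  case (E_app s s' t t')
  from E_app(5) show ?case
  proof (cases rule: wh.cases)
    case (wh_beta A)
    then obtain A' where A': "beta\<^sup>*\<^sup>* s' (Abs A')" "E A A'" using E_abs_inv E_app(1) by blast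
    have "beta\<^sup>*\<^sup>* (App s' t') (App (Abs A') t')" using A'(1) by (rule betas_appL)
    also have "beta\<^sup>*\<^sup>* (App (Abs A') t') (subst A' t' 0)" by (auto intro: beta.intros)
    finally show ?thesis using wh_beta A'(2) E_app by (auto intro: E_subst)
  next
    case (wh_app s1)
    then obtain Y1 where "beta\<^sup>*\<^sup>* s' Y1" "E s1 Y1" using E_app by blast
    then show ?thesis using wh_app E_app by (auto intro: E.intros betas_appL)
  qed
qed

lemma E_dir1: "hn X \<Longrightarrow> E X Y \<Longrightarrow> solvable Y"
proof (induct arbitrary: Y rule: hn.induct)
  case (hn_hva M)
  then obtain W where W: "head_var_app W" "beta\<^sup>*\<^sup>* Y W \<or> beta\<^sup>*\<^sup>* Y (eta W)"
    using E_hva by blast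
  have "solvable W" "solvable (eta W)" using W(1) hnf_eta
    by (auto simp: solvable_def intro: hnf.intros equivp_reflp[OF equivp_beta_conv])
  then show ?case using W(2) betas_solvable by blast
next
  case (hn_abs M)
  then obtain A' where A': "beta\<^sup>*\<^sup>* Y (Abs A')" "E M A'" using E_abs_inv by blast
  then have "solvable A'" using hn_abs by blast
  then have "solvable (Abs A')" unfolding solvable_hn by (rule hn.hn_abs)
  then show ?case using A'(1) betas_solvable by blast
next
  case (hn_wh M M')
  then obtain Y1 where "beta\<^sup>*\<^sup>* Y Y1" "E M' Y1" using E_wh1 by blast
  then show ?case using hn_wh betas_solvable by blast
qed

lemma E_hva2: "E X Y \<Longrightarrow> head_var_app Y \<Longrightarrow> head_var_app X"
proof (induct rule: E.induct)
  case (E_app s s' t t') then show ?case by simp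
next
  case (E_eta s s') then show ?case by (simp add: eta_def)
qed auto

lemma E_wh2: "E X Y \<Longrightarrow> wh Y Y1 \<Longrightarrow> \<exists>X1. beta\<^sup>*\<^sup>* X X1 \<and> E X1 Y1"
proof (induct arbitrary: Y1 rule: E.induct)
  case (E_var i) then show ?case by simp
next
  case (E_abs s s') then show ?case by simp
next
  case (E_eta s s') then show ?case by (simp add: eta_def)
next
  case (E_app s s' t t')
  from E_app(5) show ?case
  proof (cases rule: wh.cases)
    case (wh_beta A')
    from E_app(1) have "E s (Abs A')" using wh_beta by simp
    then show ?thesis
    proof (cases rule: E.cases)
      case (E_abs A)
      have "beta\<^sup>*\<^sup>* (App s t) (subst A t 0)" using E_abs by (auto intro: beta.intros)
      moreover have "E (subst A t 0) Y1" using E_abs wh_beta E_app by (auto intro: E_subst)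
      ultimately show ?thesis by blast
    next
      case (E_eta s0)
      then have "A' = App (lift s0 0) (Var 0)" by (simp add: eta_def)
      then have "Y1 = App s0 t'" using wh_beta by simp
      then show ?thesis using E_eta E_app by (auto intro: E.intros)
    qed
  next
    case (wh_app s1)
    then obtain X1 where "beta\<^sup>*\<^sup>* s X1" "E X1 s1" using E_app by blast
    then show ?thesis using wh_app E_app by (auto intro: E.intros betas_appL)
  qed
qed

lemma E_dir2: "hn Y \<Longrightarrow> E X Y \<Longrightarrow> solvable X"
proof (induct arbitrary: X rule: hn.induct)
  case (hn_hva M)
  then have "head_var_app X" using E_hva2 by blast
  then show ?case unfolding solvable_hn by (rule hn.hn_hva)
next
  case (hn_abs A')
  from hn_abs(3) show ?case
  proof (cases rule: E.cases)
    case (E_abs A)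
    then show ?thesis using hn_abs unfolding solvable_hn by (auto intro: hn.hn_abs)
  next
    case (E_eta Y0)
    then have A': "A' = App (lift Y0 0) (Var 0)" by (simp add: eta_def)
    have "E (App (lift X 0) (Var 0)) A'" unfolding A' using E_eta
      by (auto intro: E.intros E_lift)
    then have "hn (App (lift X 0) (Var 0))" using hn_abs solvable_hn by blast
    then have "hn (lift X 0)" using hn_app_inv by blast
    then show ?thesis using hn_lift_inv solvable_hn by blast
  qed
next
  case (hn_wh M M')
  then obtain X1 where "beta\<^sup>*\<^sup>* X X1" "E X1 M'" using E_wh2 by blast
  then show ?case using hn_wh betas_solvable by blast
qed

lemma E_plug: "E M N \<Longrightarrow> E (plug D M) (plug D N)"
  by (induct D) (auto intro: E.intros E_refl)

lemma eta_solvable: "solvable (plug D M) \<longleftrightarrow> solvable (plug D (Abs (App (lift M 0) (Var 0))))"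
proof -
  have e: "E (plug D M) (plug D (eta M))" by (intro E_plug E.E_eta E_refl)
  show ?thesis unfolding eta_def[symmetric]
    using E_dir1[OF _ e] E_dir2[OF _ e] solvable_hn by blast
qed



definition Omega :: lterm where
  "Omega = App (Abs (App (Var 0) (Var 0))) (Abs (App (Var 0) (Var 0)))"

lemma Omega_hn: "hn X \<Longrightarrow> X \<noteq> Omega"
proof (induct rule: hn.induct)
  case (hn_hva M) then show ?case by (auto simp: Omega_def)
next
  case (hn_wh M M')
  then show ?case by (auto simp: Omega_def wh_App)
qed (auto simp: Omega_def)

lemma Omega_unsolvable: "\<not> solvable Omega"
  using Omega_hn solvable_hn by blast

primrec ccomp :: "ctx \<Rightarrow> ctx \<Rightarrow> ctx" where
  "ccomp Hole D = D"
| "ccomp (CAppL C N) D = CAppL (ccomp C D) N"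
| "ccomp (CAppR N C) D = CAppR N (ccomp C D)"
| "ccomp (CAbs C) D = CAbs (ccomp C D)"

lemma plug_ccomp[simp]: "plug (ccomp C D) M = plug C (plug D M)"
  by (induct C) auto

lemma size_ccomp: "size (ccomp C D) = size C + size D"
  by (induct C) auto

lemma ccomp_id: "ccomp C D = D \<Longrightarrow> C = Hole"
proof -
  assume "ccomp C D = D"
  then have "size C = 0" using size_ccomp[of C D] by simp
  then show ?thesis by (cases C) auto
qed

lemma ccomp_inj: "ccomp C1 D = ccomp C2 D \<Longrightarrow> C1 = C2"
proof (induct C1 arbitrary: C2)
  case Hole then show ?case using ccomp_id[of C2 D] by simp
next
  case (CAppL C N) then show ?case using ccomp_id[of "CAppL C N" D] by (cases C2) simp_all
next
  case (CAppR N C) then show ?case using ccomp_id[of "CAppR N C" D] by (cases C2) simp_all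
next
  case (CAbs C) then show ?case using ccomp_id[of "CAbs C" D] by (cases C2) simp_all
qed



section \<open>measure on sets of naturals\<close>

definition wt :: "nat set \<Rightarrow> nat \<Rightarrow> real" where
  "wt S n = (if n \<in> S then (1/2)^n else 0)"

definition mu :: "nat set \<Rightarrow> real" where
  "mu S = suminf (wt S)"

lemma wt_nonneg: "0 \<le> wt S n" by (simp add: wt_def)

lemma summable_wt: "summable (wt S)"
  by (rule summable_comparison_test'[OF summable_geometric[of "1/2::real"]]) (auto simp: wt_def)

lemma mu_nonneg: "0 \<le> mu S"
  unfolding mu_def by (rule suminf_nonneg[OF summable_wt wt_nonneg])

lemma mu_mono: "S \<subseteq> T \<Longrightarrow> mu S \<le> mu T"
  unfolding mu_def by (rule suminf_le) (auto simp: wt_def summable_wt)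

lemma mu_union_diff: "mu (S \<union> T) = mu S + mu (T - S)"
proof -
  have "mu S + mu (T - S) = (\<Sum>n. wt S n + wt (T - S) n)"
    unfolding mu_def by (rule suminf_add[OF summable_wt summable_wt])
  also have "\<dots> = mu (S \<union> T)" unfolding mu_def
    by (rule suminf_cong) (auto simp: wt_def)
  finally show ?thesis by simp
qed

lemma mu_empty[simp]: "mu {} = 0"
proof -
  have "wt {} = (\<lambda>n. 0)" by (auto simp: wt_def fun_eq_iff)
  then show ?thesis by (simp add: mu_def)
qed

lemma mu_ge: "m \<in> S \<Longrightarrow> (1/2)^m \<le> mu S"
proof -
  assume "m \<in> S"
  have "sum (wt S) {m} \<le> suminf (wt S)"
    by (rule sum_le_suminf[OF summable_wt]) (auto simp: wt_nonneg)
  then show ?thesis using \<open>m \<in> S\<close> by (simp add: mu_def wt_def)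
qed

lemma mu_pos: "S \<noteq> {} \<Longrightarrow> 0 < mu S"
proof -
  assume "S \<noteq> {}" then obtain m where "m \<in> S" by blast
  then have "(1/2::real)^m \<le> mu S" by (rule mu_ge)
  moreover have "(0::real) < (1/2)^m" by simp
  ultimately show ?thesis by linarith
qed

lemma mu_zero_iff: "mu S \<le> 0 \<longleftrightarrow> S = {}"
  using mu_pos[of S] by (cases "S = {}") auto

lemma mu_sub: "mu (S \<union> T) \<le> mu S + mu T"
  using mu_union_diff[of S T] mu_mono[of "T - S" T] by auto

lemma mu_tri: "mu (A \<union> B) + mu Z \<le> mu (A \<union> Z) + mu (Z \<union> B)"
proof -
  define D where "D = (Z \<union> B) - (A \<union> Z)"
  have "mu (A \<union> B) \<le> mu ((A \<union> Z) \<union> (Z \<union> B))" by (rule mu_mono) auto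
  also have "\<dots> = mu (A \<union> Z) + mu D" unfolding D_def by (rule mu_union_diff)
  finally have 1: "mu (A \<union> B) \<le> mu (A \<union> Z) + mu D" .
  have "mu (Z \<union> D) = mu Z + mu (D - Z)" by (rule mu_union_diff)
  moreover have "D - Z = D" unfolding D_def by auto
  ultimately have 2: "mu (Z \<union> D) = mu Z + mu D" by simp
  have "mu (Z \<union> D) \<le> mu (Z \<union> B)" by (rule mu_mono) (auto simp: D_def)
  then show ?thesis using 1 2 by linarith
qed

lemma mu_tail: "S \<subseteq> {N..} \<Longrightarrow> mu S \<le> 2 * (1/2)^N"
proof -
  assume S: "S \<subseteq> {N..}"
  have "mu S = (\<Sum>n. wt S (n + N)) + (\<Sum>i<N. wt S i)"
    unfolding mu_def by (rule suminf_split_initial_segment[OF summable_wt])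
  also have "(\<Sum>i<N. wt S i) = 0" using S by (auto simp: wt_def intro!: sum.neutral)
  also have "(\<Sum>n. wt S (n + N)) \<le> (\<Sum>n. (1/2)^N * (1/2::real)^n)"
  proof (rule suminf_le)
    show "summable (\<lambda>n. wt S (n + N))" using summable_wt summable_iff_shift by blast
    show "summable (\<lambda>n. (1/2)^N * (1/2::real)^n)"
      by (rule summable_mult[OF summable_geometric]) simp
    fix n show "wt S (n + N) \<le> (1/2)^N * (1/2) ^ n"
      by (auto simp: wt_def power_add)
  qed
  also have "(\<Sum>n. (1/2)^N * (1/2::real)^n) = (1/2)^N * 2"
    using suminf_mult[OF summable_geometric[of "1/2::real"], of "(1/2)^N"]
      suminf_geometric[of "1/2::real"] by simp
  finally show ?thesis by simp
qed

definition U :: "(nat \<Rightarrow> ctx) \<Rightarrow> lterm \<Rightarrow> nat set" where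
  "U C M = {n. \<not> solvable (plug (C n) M)}"

lemma p_ctx_mu: "p_ctx C M N = ennreal (mu (U C M \<union> U C N))"
proof -
  have "(\<lambda>n. if \<not> solvable (plug (C n) M) \<or> \<not> solvable (plug (C n) N)
          then ennreal (1 / 2 ^ n) else 0) = (\<lambda>n. ennreal (wt (U C M \<union> U C N) n))"
    by (auto simp: wt_def U_def power_one_over)
  then show ?thesis unfolding p_ctx_def mu_def
    using suminf_ennreal2[OF wt_nonneg summable_wt] by simp
qed

lemma ppm_p: "ppm (p_ctx C)"
  unfolding ppm_def p_ctx_mu
proof (intro conjI allI)
  fix x y
  show "ennreal (mu (U C x \<union> U C x)) \<le> ennreal (mu (U C x \<union> U C y))"
    by (intro ennreal_leI mu_mono) auto
  show "ennreal (mu (U C x \<union> U C y)) = ennreal (mu (U C y \<union> U C x))"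
    by (simp add: Un_commute)
next
  fix x y z
  have "mu (U C x \<union> U C y) + mu (U C z \<union> U C z) \<le> mu (U C x \<union> U C z) + mu (U C z \<union> U C y)"
    using mu_tri by simp
  then have "ennreal (mu (U C x \<union> U C y) + mu (U C z \<union> U C z))
     \<le> ennreal (mu (U C x \<union> U C z) + mu (U C z \<union> U C y))" by (rule ennreal_leI)
  then show "ennreal (mu (U C x \<union> U C y)) + ennreal (mu (U C z \<union> U C z))
         \<le> ennreal (mu (U C x \<union> U C z)) + ennreal (mu (U C z \<union> U C y))"
    by (simp add: mu_nonneg)
qed

lemma ppm_le_U: "ppm_le (p_ctx C) x y \<longleftrightarrow> U C y \<subseteq> U C x"
proof -
  have "ppm_le (p_ctx C) x y \<longleftrightarrow> mu (U C x \<union> U C y) \<le> mu (U C x)"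
    unfolding ppm_le_def p_ctx_mu by (simp add: mu_nonneg)
  also have "\<dots> \<longleftrightarrow> mu (U C y - U C x) \<le> 0" using mu_union_diff[of "U C x" "U C y"] by simp
  also have "\<dots> \<longleftrightarrow> U C y - U C x = {}" by (rule mu_zero_iff)
  finally show ?thesis by blast
qed

lemma ppm_eq_U: "ppm_eq (p_ctx C) x y \<longleftrightarrow> U C x = U C y"
  unfolding ppm_eq_def ppm_le_U by blast

lemma ppm_ball_U: "\<epsilon> > 0 \<Longrightarrow> ppm_ball (p_ctx C) \<epsilon> x = {y. mu (U C y - U C x) < \<epsilon>}"
proof -
  assume e: "\<epsilon> > 0"
  have "\<And>y. p_ctx C y x < p_ctx C x x + ennreal \<epsilon> \<longleftrightarrow> mu (U C y - U C x) < \<epsilon>"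
  proof -
    fix y
    have "p_ctx C x x + ennreal \<epsilon> = ennreal (mu (U C x) + \<epsilon>)"
      using e by (simp add: p_ctx_mu mu_nonneg)
    then have "p_ctx C y x < p_ctx C x x + ennreal \<epsilon> \<longleftrightarrow> mu (U C y \<union> U C x) < mu (U C x) + \<epsilon>"
      by (simp add: p_ctx_mu ennreal_less_iff mu_nonneg)
    also have "\<dots> \<longleftrightarrow> mu (U C y - U C x) < \<epsilon>" using mu_union_diff[of "U C x" "U C y"]
      by (simp add: Un_commute)
    finally show "?thesis y" .
  qed
  then show ?thesis unfolding ppm_ball_def by blast
qed

definition obs :: "lterm \<Rightarrow> lterm \<Rightarrow> bool" where
  "obs M N \<longleftrightarrow> (\<forall>D. solvable (plug D M) \<longleftrightarrow> solvable (plug D N))"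

lemma U_eq_obs: "bij C \<Longrightarrow> U C x = U C y \<longleftrightarrow> obs x y"
proof
  assume b: "bij C" and e: "U C x = U C y"
  show "obs x y" unfolding obs_def
  proof
    fix D
    obtain n where "C n = D" using b by (metis bij_pointE)
    then show "solvable (plug D x) \<longleftrightarrow> solvable (plug D y)"
      using e unfolding U_def by blast
  qed
next
  assume "obs x y" then show "U C x = U C y" unfolding U_def obs_def by blast
qed

lemma obs_ctx: "obs M N \<Longrightarrow> obs (plug D0 M) (plug D0 N)"
  unfolding obs_def by (metis plug_ccomp)

lemma lambda_theory_obs: "lambda_theory obs"
  unfolding lambda_theory_def
proof (intro conjI allI impI)
  show "equivp obs" by (rule equivpI) (auto simp: reflp_def symp_def transp_def obs_def)
  fix M N P
  assume "obs M N"
  then show "obs (App M P) (App N P)" using obs_ctx[of M N "CAppL Hole P"] by simp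
next
  fix M N P
  assume "obs M N"
  then show "obs (App P M) (App P N)" using obs_ctx[of M N "CAppR P Hole"] by simp
next
  fix M N
  assume "obs M N"
  then show "obs (Abs M) (Abs N)" using obs_ctx[of M N "CAbs Hole"] by simp
next
  fix M N
  show "obs (App (Abs M) N) (subst M N 0)" unfolding obs_def
  proof
    fix D
    have "beta_conv (plug D (App (Abs M) N)) (plug D (subst M N 0))"
      unfolding beta_conv_def by (auto intro: beta_plug beta.beta_rule)
    then show "solvable (plug D (App (Abs M) N)) \<longleftrightarrow> solvable (plug D (subst M N 0))"
      using conv_solvable equivp_beta_conv by (meson equivp_symp)
  qed
qed

lemma ext_obs: "obs M (Abs (App (lift M 0) (Var 0)))"
  unfolding obs_def using eta_solvable by blast

lemma ppm_eq_obs: "bij C \<Longrightarrow> ppm_eq (p_ctx C) = obs"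
  using ppm_eq_U U_eq_obs by blast

section \<open>continuity\<close>

lemma open_char:
  assumes "\<forall>y\<in>V. \<exists>x \<epsilon>. \<epsilon> > 0 \<and> y \<in> ppm_ball p \<epsilon> x \<and> ppm_ball p \<epsilon> x \<subseteq> V"
  shows "ppm_open p V"
  unfolding ppm_open_def
proof (intro exI conjI)
  let ?F = "{B. \<exists>x \<epsilon>. \<epsilon> > 0 \<and> B = ppm_ball p \<epsilon> x \<and> B \<subseteq> V}"
  show "\<forall>B\<in>?F. \<exists>x \<epsilon>. \<epsilon> > 0 \<and> B = ppm_ball p \<epsilon> x" by blast
  show "V = \<Union>?F" using assms by blast
qed

lemma continuous_plug:
  assumes b: "bij C"
  shows "ppm_continuous (p_ctx C) (plug D)"
  unfolding ppm_continuous_def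
proof (intro allI impI)
  fix V assume "ppm_open (p_ctx C) V"
  then obtain F where F: "\<forall>B\<in>F. \<exists>x \<epsilon>. \<epsilon> > 0 \<and> B = ppm_ball (p_ctx C) \<epsilon> x" "V = \<Union>F"
    unfolding ppm_open_def by blast
  show "ppm_open (p_ctx C) (plug D -` V)"
  proof (rule open_char, rule ballI)
    fix y assume "y \<in> plug D -` V"
    then obtain B where "B \<in> F" "plug D y \<in> B" using F by auto
    then obtain x \<epsilon> where xe: "\<epsilon> > 0" "B = ppm_ball (p_ctx C) \<epsilon> x" using F by blast
    have ylt: "mu (U C (plug D y) - U C x) < \<epsilon>"
      using \<open>plug D y \<in> B\<close> xe ppm_ball_U by auto
    define e' where "e' = \<epsilon> - mu (U C (plug D y) - U C x)"
    have e': "e' > 0" using ylt e'_def by simp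
    obtain N where N: "(1/2::real)^N < e' / 2" using real_arch_pow_inv[of "e'/2" "1/2"] e' by auto
    define \<sigma> where "\<sigma> n = inv C (ccomp (C n) D)" for n
    define K where "K = Max (insert 0 (\<sigma> ` {..<N}))"
    have sK: "n < N \<Longrightarrow> \<sigma> n \<le> K" for n unfolding K_def by (auto intro: Max_ge)
    have Cs: "C (\<sigma> n) = ccomp (C n) D" for n
      unfolding \<sigma>_def using b by (simp add: bij_is_surj surj_f_inv_f)
    define \<delta> where "\<delta> = (1/2::real)^K"
    have d: "\<delta> > 0" unfolding \<delta>_def by simp
    show "\<exists>x \<epsilon>. \<epsilon> > 0 \<and> y \<in> ppm_ball (p_ctx C) \<epsilon> x \<and> ppm_ball (p_ctx C) \<epsilon> x \<subseteq> plug D -` V"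
    proof (intro exI conjI)
      show "\<delta> > 0" by (rule d)
      show "y \<in> ppm_ball (p_ctx C) \<delta> y" using d by (simp add: ppm_ball_U)
      show "ppm_ball (p_ctx C) \<delta> y \<subseteq> plug D -` V"
      proof
        fix w assume "w \<in> ppm_ball (p_ctx C) \<delta> y"
        then have w: "mu (U C w - U C y) < \<delta>" using d by (simp add: ppm_ball_U)
        have noK: "m \<notin> U C w - U C y" if "m \<le> K" for m
        proof
          assume "m \<in> U C w - U C y"
          then have "(1/2::real)^m \<le> mu (U C w - U C y)" by (rule mu_ge)
          moreover have "(1/2::real)^K \<le> (1/2)^m" using that by (simp add: power_decreasing)
          ultimately show False using w \<delta>_def by linarith
        qed
        have sub: "U C (plug D w) - U C (plug D y) \<subseteq> {N..}"
        proof
          fix n assume n: "n \<in> U C (plug D w) - U C (plug D y)"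
          then have "\<sigma> n \<in> U C w - U C y" unfolding U_def using Cs by simp
          then show "n \<in> {N..}" using noK sK by (meson atLeast_iff not_le)
        qed
        have "mu (U C (plug D w) - U C (plug D y)) \<le> 2 * (1/2)^N" by (rule mu_tail[OF sub])
        then have 1: "mu (U C (plug D w) - U C (plug D y)) < e'" using N by linarith
        have "mu (U C (plug D w) - U C x)
           \<le> mu ((U C (plug D w) - U C (plug D y)) \<union> (U C (plug D y) - U C x))"
          by (rule mu_mono) auto
        also have "\<dots> \<le> mu (U C (plug D w) - U C (plug D y)) + mu (U C (plug D y) - U C x)"
          by (rule mu_sub)
        finally have "mu (U C (plug D w) - U C x) < \<epsilon>" using 1 e'_def by linarith
        then have "plug D w \<in> B" using xe by (simp add: ppm_ball_U)
        then show "w \<in> plug D -` V" using F \<open>B \<in> F\<close> by auto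
      qed
    qed
  qed
qed

theorem mainTheorem2:
  fixes C :: "nat \<Rightarrow> ctx"
  assumes "bij C"
  shows "sensible (p_ctx C) \<and> ext_lambda_ppm (p_ctx C)"
proof -
  have eq: "ppm_eq (p_ctx C) = obs" using ppm_eq_obs[OF assms] .
  have lt: "lambda_theory (ppm_eq (p_ctx C))" unfolding eq by (rule lambda_theory_obs)
  have cont: "\<forall>D. ppm_continuous (p_ctx C) (plug D)" using continuous_plug[OF assms] by blast
  have lp: "lambda_ppm (p_ctx C)" unfolding lambda_ppm_def using ppm_p lt cont by blast
  have gen: "generic (p_ctx C) M" if "\<not> solvable M" for M
    unfolding generic_def ppm_le_U U_def using genericity[OF that] by blast
  have ngen: "\<not> generic (p_ctx C) M" if "solvable M" for M
  proof
    assume "generic (p_ctx C) M"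
    then have "U C Omega \<subseteq> U C M" unfolding generic_def ppm_le_U by blast
    moreover obtain n where "C n = Hole" using assms by (metis bij_pointE)
    then have "n \<in> U C Omega" using Omega_unsolvable by (simp add: U_def)
    ultimately have "n \<in> U C M" by blast
    then show False using that \<open>C n = Hole\<close> by (simp add: U_def)
  qed
  have "sensible (p_ctx C)" unfolding sensible_def using lp gen ngen by blast
  moreover have "ext_lambda_ppm (p_ctx C)" unfolding ext_lambda_ppm_def ext_lambda_theory_def
    using ppm_p lt cont eq ext_obs by simp
  ultimately show ?thesis ..
qed


end
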